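(* For each integer $n\ge4$ there exists $\phi\in\mathbb{R}$ such that $$\left|\frac{\sin n\phi}{n\sin\phi}\right|-\left|\frac{\sin (n+1)\phi}{(n+1)\sin\phi}\right|>\frac1n;$$ more precisely, with $\theta_n=\pi/(n+1)$ and $\Psi_n(\phi)$ denoting the left-hand side, $\Psi_n(\theta_n)=1/n$ and $\Psi_n(\theta_n-\delta)>1/n$ for all sufficiently small $\delta>0$.
   Context: The quantity $\Psi_n(\phi)$ equals $|a_n(L_\phi)|-|a_{n+1}(L_\phi)|$ where $L_\phi(z)=\sum_{n\ge1}\frac{\sin n\phi}{n\sin\phi}z^n$. *)

theory Defs
  imports "HOL-Analysis.Analysis"
begin

definition Psi :: "nat \<Rightarrow> real \<Rightarrow> real" where
  "Psi n \<phi> = \<bar>sin (real n * \<phi>) / (real n * sin \<phi>)\<bar>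
             - \<bar>sin (real (n + 1) * \<phi>) / (real (n + 1) * sin \<phi>)\<bar>"

end

theory Submission
  imports Defs "HOL-Analysis.Analysis"
begin

lemma cos_lb: "1 - x^2/2 \<le> cos (x::real)"
proof -
  have c: "cos x = 1 - 2 * (sin (x/2))^2"
    using cos_double_sin[of "x/2"] by simp
  have "\<bar>sin (x/2)\<bar> \<le> \<bar>x/2\<bar>" by (rule abs_sin_x_le_abs_x)
  hence "(sin (x/2))^2 \<le> (x/2)^2"
    by (metis abs_le_square_iff)
  thus ?thesis using c by (simp add: power_divide)
qed

lemma alg0: "c > 0 \<Longrightarrow> (N::real) > 0 \<Longrightarrow> M > 0 \<Longrightarrow>
  a/(N*c) - b/(M*c) - 1/N = (M*a - N*b - M*c)/(N*M*c)"
  by (simp add: field_simps)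

lemma alg: "c > 0 \<Longrightarrow> (N::real) > 0 \<Longrightarrow>
  a/(N*c) - b/((N+1)*c) - 1/N = ((N+1)*a - N*b - (N+1)*c)/(N*(N+1)*c)"
  by (rule alg0) auto

theorem mainTheorem3:
  fixes n :: nat
  assumes "n \<ge> 4"
  shows "(\<exists>\<phi>::real. Psi n \<phi> > 1 / real n)
    \<and> Psi n (pi / real (n + 1)) = 1 / real n
    \<and> (\<forall>\<^sub>F \<delta> in at_right (0::real). Psi n (pi / real (n + 1) - \<delta>) > 1 / real n)"
proof -
  define N where "N = real n"
  have N4: "N \<ge> 4" using assms by (simp add: N_def)
  define t where "t = pi / (N + 1)"
  have tpos: "0 < t" and tlt: "t < pi" using N4 by (auto simp: t_def field_simps)
  have Nt: "(N+1) * t = pi" using N4 by (simp add: t_def)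
  have sint: "sin t > 0" using tpos tlt by (simp add: sin_gt_zero)
  have snt: "sin (N * t) = sin t"
  proof -
    have "N * t = pi - t" using Nt by (simp add: algebra_simps)
    thus ?thesis by simp
  qed
  have cnt: "cos (N * t) = - cos t"
  proof -
    have "N * t = pi - t" using Nt by (simp add: algebra_simps)
    thus ?thesis by simp
  qed
  have rn1: "real (n+1) = N + 1" by (simp add: N_def)
  have val: "Psi n t = 1 / N"
  proof -
    have "Psi n t = \<bar>sin (N * t) / (N * sin t)\<bar> - \<bar>sin ((N+1) * t) / ((N+1) * sin t)\<bar>"
      unfolding Psi_def rn1 N_def ..
    also have "\<dots> = 1 / N" using sint N4 unfolding snt Nt by simp
    finally show ?thesis .
  qed
  have pi2: "pi^2 < 2 * (N+1)"
  proof -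
    have "pi \<le> 3.15" using pi_approx(2) by simp
    hence p2: "pi^2 \<le> 3.15^2" using pi_gt_zero by (intro power_mono) auto
    have "(3.15::real)^2 < 2 * (N+1)" using N4 by (simp add: power2_eq_square)
    thus ?thesis using p2 by linarith
  qed
  have key: "(N+1) * cos t > N"
  proof -
    have "(N+1) * cos t \<ge> (N+1) * (1 - t^2/2)"
      using cos_lb[of t] N4 by (intro mult_left_mono) auto
    moreover have "(N+1) * t^2 = pi^2 / (N+1)"
    proof -
      have "(N+1) * t^2 = ((N+1) * t) * t" by (simp add: power2_eq_square)
      also have "\<dots> = pi * (pi / (N+1))" by (simp only: Nt) (simp add: t_def)
      finally show ?thesis by (simp add: power2_eq_square)
    qed
    moreover have "pi^2/(N+1) < 2" using pi2 N4 by (simp add: field_simps)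
    ultimately have A: "(N+1) * cos t \<ge> (N+1) - ((N+1)*t^2)/2" and B: "(N+1)*t^2 < 2"
      by (simp_all add: right_diff_distrib)
    from A B show ?thesis by linarith
  qed
  define H where "H = (\<lambda>d. (N+1) * sin (N*t - N*d) - N * sin ((N+1)*d) - (N+1) * sin (t - d))"
  have H0: "H 0 = 0" by (simp add: H_def snt)
  have dH: "(H has_real_derivative ((N+1) * ((N+1) * cos t - N))) (at 0)"
  proof -
    have "(H has_real_derivative
       ((N+1) * (cos (N*t - N*0) * (0 - N * 1)) - N * (cos ((N+1)*0) * ((N+1) * 1))
        - (N+1) * (cos (t - 0) * (0 - 1)))) (at 0)"
      unfolding H_def by (intro derivative_eq_intros) auto
    moreover have "(N+1) * (cos (N*t - N*0) * (0 - N * 1)) - N * (cos ((N+1)*0) * ((N+1) * 1))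
        - (N+1) * (cos (t - 0) * (0 - 1)) = (N+1) * ((N+1) * cos t - N)"
      by (simp add: cnt algebra_simps)
    ultimately show ?thesis by simp
  qed
  have dpos: "(N+1) * ((N+1) * cos t - N) > 0" using key N4 by simp
  obtain d where d: "d > 0" "\<And>h. h > 0 \<Longrightarrow> h < d \<Longrightarrow> H 0 < H (0 + h)"
    using DERIV_pos_inc_right[OF dH dpos] by blast
  have near: "Psi n (t - h) > 1 / N" if h: "0 < h" "h < d" "h < t" for h
  proof -
    have Hp: "H h > 0" using d(2)[OF h(1,2)] H0 by simp
    have s1: "sin (t - h) > 0" using h tlt by (intro sin_gt_zero) auto
    have s2: "sin (N*(t - h)) > 0"
    proof (rule sin_gt_zero)
      show "0 < N*(t-h)" using h N4 by simp
      have "N*(t-h) \<le> N * t" using h N4 by simp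
      also have "N*t < pi" using Nt tpos by (simp add: algebra_simps)
      finally show "N*(t-h) < pi" .
    qed
    have e3: "sin ((N+1)*(t-h)) = sin ((N+1)*h)"
    proof -
      have "(N+1)*(t-h) = pi - (N+1)*h" using Nt by (simp add: algebra_simps)
      thus ?thesis by simp
    qed
    have s3: "sin ((N+1)*h) > 0"
    proof (rule sin_gt_zero)
      show "0 < (N+1)*h" using h N4 by simp
      have "(N+1)*h < (N+1)*t" using h N4 by simp
      thus "(N+1)*h < pi" using Nt by simp
    qed
    have P: "Psi n (t-h) = sin (N*(t-h)) / (N * sin (t-h)) - sin ((N+1)*h) / ((N+1) * sin (t-h))"
    proof -
      have "Psi n (t-h) = \<bar>sin (N * (t-h)) / (N * sin (t-h))\<bar> - \<bar>sin ((N+1) * (t-h)) / ((N+1) * sin (t-h))\<bar>"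
        unfolding Psi_def rn1 N_def ..
      also have "\<dots> = sin (N*(t-h)) / (N * sin (t-h)) - sin ((N+1)*h) / ((N+1) * sin (t-h))"
        unfolding e3 using s1 s2 s3 N4 by simp
      finally show ?thesis .
    qed
    have "Psi n (t-h) - 1/N = H h / (N * (N+1) * sin (t-h))"
      unfolding P H_def using s1 N4 alg[of "sin (t-h)" N "sin (N*(t-h))" "sin ((N+1)*h)"]
      by (simp add: right_diff_distrib)
    moreover have "H h / (N * (N+1) * sin (t-h)) > 0" using Hp s1 N4 by simp
    ultimately show ?thesis by simp
  qed
  have ev: "\<forall>\<^sub>F h in at_right (0::real). Psi n (t - h) > 1 / N"
    unfolding eventually_at_right_field
    using near d(1) tpos by (intro exI[of _ "min d t"]) auto
  have ex: "\<exists>\<phi>. Psi n \<phi> > 1 / N"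
  proof -
    have "\<exists>h. 0 < h \<and> h < d \<and> h < t" using d(1) tpos
      by (intro exI[of _ "min d t / 2"]) auto
    thus ?thesis using near by blast
  qed
  have tt: "pi / real (n + 1) = t" by (simp add: t_def N_def)
  show ?thesis unfolding tt using ex val ev by (simp add: N_def)
qed

end
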